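(* Let $A^1,A^2$ be finite nonempty sets, let $\tau^1,\tau^2\ge 0$, and for $i\in\{1,2\}$ with $j\neq i$ let $R^i\in\mathbb{R}^{|A^i|\times|A^j|}$ be arbitrary. Let $\underline{r}$ and $\overline{r}$ denote, respectively, the minimum and maximum entries of the matrix $R^1+(R^2)^T$. Then $$\underline{r}\le \mathrm{val}^1(R^1)+\mathrm{val}^2(R^2)\le \overline{r},\qquad \underline{r}\le \underline{\mathrm{val}}^1(R^1)+\underline{\mathrm{val}}^2(R^2)\le \overline{r},$$ and, for each $i\in\{1,2\}$ and $j\ne i$, $$-\tau^j\log|A^j|\le \underline{\mathrm{val}}^i(R^i)-\mathrm{val}^i(R^i)\le \tau^i\log|A^i|.$$
   Context: $\Delta^i$ denotes the probability simplex over $A^i$. The entropy is $H^i(\mu^i)=-\sum_{a^i\in A^i}\mu^i(a^i)\log\mu^i(a^i)\in[0,\log|A^i|]$. For $i\in\{1,2\}$, $j\neq i$: $\mathrm{val}^i(R^i)=\max_{\mu^i\in\Delta^i}\min_{\mu^j\in\Delta^j}(\mu^i)^TR^i\mu^j$ and $\underline{\mathrm{val}}^i(R^i)=\max_{\mu^i\in\Delta^i}\min_{\mu^j\in\Delta^j}\{(\mu^i)^TR^i\mu^j+\tau^iH^i(\mu^i)-\tau^jH^j(\mu^j)\}$. *)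

theory Defs
  imports "HOL-Analysis.Analysis"
begin

definition psimplex :: "'a set \<Rightarrow> ('a \<Rightarrow> real) set" where
  "psimplex A = {\<mu>. (\<forall>a\<in>A. 0 \<le> \<mu> a) \<and> (\<forall>a. a \<notin> A \<longrightarrow> \<mu> a = 0) \<and> (\<Sum>a\<in>A. \<mu> a) = 1}"

text \<open>Entropy H(mu) = - sum mu(a) log mu(a) (natural log; 0 log 0 = 0 since ln 0 = 0 in HOL).\<close>
definition entropy :: "'a set \<Rightarrow> ('a \<Rightarrow> real) \<Rightarrow> real" where
  "entropy A \<mu> = - (\<Sum>a\<in>A. \<mu> a * ln (\<mu> a))"

definition bilin :: "'a set \<Rightarrow> 'b set \<Rightarrow> ('a \<Rightarrow> 'b \<Rightarrow> real) \<Rightarrow> ('a \<Rightarrow> real) \<Rightarrow> ('b \<Rightarrow> real) \<Rightarrow> real" where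
  "bilin A B R \<mu> \<nu> = (\<Sum>a\<in>A. \<Sum>b\<in>B. \<mu> a * R a b * \<nu> b)"

definition val :: "'a set \<Rightarrow> 'b set \<Rightarrow> ('a \<Rightarrow> 'b \<Rightarrow> real) \<Rightarrow> real" where
  "val A B R = (SUP \<mu>\<in>psimplex A. INF \<nu>\<in>psimplex B. bilin A B R \<mu> \<nu>)"

definition rval :: "real \<Rightarrow> real \<Rightarrow> 'a set \<Rightarrow> 'b set \<Rightarrow> ('a \<Rightarrow> 'b \<Rightarrow> real) \<Rightarrow> real" where
  "rval ti tj A B R = (SUP \<mu>\<in>psimplex A. INF \<nu>\<in>psimplex B.
      bilin A B R \<mu> \<nu> + ti * entropy A \<mu> - tj * entropy B \<nu>)"

end

theory Submission
  imports Defs "HOL-Real_Asymp.Real_Asymp"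
begin


definition seg :: "('c \<Rightarrow> real) \<Rightarrow> ('c \<Rightarrow> real) \<Rightarrow> real \<Rightarrow> 'c \<Rightarrow> real" where
  "seg p q s = (\<lambda>a. (1 - s) * p a + s * q a)"

definition cvxset :: "('c \<Rightarrow> real) set \<Rightarrow> bool" where
  "cvxset S \<longleftrightarrow> (\<forall>p\<in>S. \<forall>q\<in>S. \<forall>s\<in>{0..1}. seg p q s \<in> S)"

definition mmhyp :: "('x \<Rightarrow> real) set \<Rightarrow> ('y \<Rightarrow> real) set \<Rightarrow> (('x \<Rightarrow> real) \<Rightarrow> ('y \<Rightarrow> real) \<Rightarrow> real) \<Rightarrow> bool" where
  "mmhyp X Y f \<longleftrightarrow> compact X \<and> cvxset X \<and> cvxset Y \<and>
    (\<forall>y\<in>Y. continuous_on X (\<lambda>x. f x y)) \<and> (\<forall>x\<in>X. continuous_on Y (\<lambda>y. f x y)) \<and>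
    (\<forall>y\<in>Y. \<forall>p\<in>X. \<forall>q\<in>X. \<forall>s\<in>{0..1}. f (seg p q s) y \<le> (1 - s) * f p y + s * f q y) \<and>
    (\<forall>x\<in>X. \<forall>p\<in>Y. \<forall>q\<in>Y. \<forall>t\<in>{0..1}. (1 - t) * f x p + t * f x q \<le> f x (seg p q t))"

lemma seg0 [simp]: "seg p q 0 = p" and seg1 [simp]: "seg p q 1 = q"
  by (auto simp: seg_def)

lemma seg_cont: "continuous_on UNIV (seg p q)"
  unfolding seg_def by (intro continuous_on_coordinatewise_then_product continuous_intros)

lemma seg_cont_comp:
  assumes "cvxset S" "p \<in> S" "q \<in> S" "continuous_on S h"
  shows "continuous_on {0..1} (\<lambda>s. h (seg p q s))"
proof -
  have "continuous_on {0..1} (seg p q)" using seg_cont continuous_on_subset by blast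
  moreover have "seg p q ` {0..1} \<subseteq> S" using assms(1-3) unfolding cvxset_def by auto
  ultimately show ?thesis using continuous_on_compose2[OF assms(4)] by blast
qed

lemma convex_ge_min:
  fixes a b t :: real
  assumes "0 \<le> t" "t \<le> 1"
  shows "min a b \<le> (1 - t) * a + t * b"
proof -
  have "(1 - t) * min a b \<le> (1 - t) * a" using assms by (intro mult_left_mono) auto
  moreover have "t * min a b \<le> t * b" using assms by (intro mult_left_mono) auto
  ultimately show ?thesis by (simp add: algebra_simps)
qed

lemma convex_le_max:
  fixes a b t :: real
  assumes "0 \<le> t" "t \<le> 1"
  shows "(1 - t) * a + t * b \<le> max a b"
proof -
  have "(1 - t) * a \<le> (1 - t) * max a b" using assms by (intro mult_left_mono) auto
  moreover have "t * b \<le> t * max a b" using assms by (intro mult_left_mono) auto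
  ultimately show ?thesis by (simp add: algebra_simps)
qed

lemma conn01:
  fixes h1 h2 :: "real \<Rightarrow> real"
  assumes c1: "continuous_on {0..1} h1" and c2: "continuous_on {0..1} h2"
    and le: "\<forall>s\<in>{0..1}. h1 s \<le> \<beta> \<or> h2 s \<le> \<beta>"
    and gt: "\<forall>s\<in>{0..1}. \<beta> < h1 s \<or> \<beta> < h2 s"
    and h10: "h1 0 \<le> \<beta>" and h21: "h2 1 \<le> \<beta>"
  shows False
proof -
  have "\<beta> < h2 0" using gt h10 by force
  moreover have "\<beta> < h1 1" using gt h21 by force
  ultimately have "(\<lambda>s. h1 s - h2 s) 0 \<le> 0" "0 \<le> (\<lambda>s. h1 s - h2 s) 1" using h10 h21 by auto
  moreover have "continuous_on {0..1} (\<lambda>s. h1 s - h2 s)" using c1 c2 by (intro continuous_intros)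
  ultimately obtain s where s: "0 \<le> s" "s \<le> 1" "h1 s - h2 s = 0"
    using IVT'[of "\<lambda>s. h1 s - h2 s" 0 0 1] by auto
  then show False using le gt by force
qed

lemma open_split01:
  fixes I J :: "real set"
  assumes cover: "\<And>t. t \<in> {0..1} \<Longrightarrow> t \<in> I \<or> t \<in> J"
    and disj: "\<And>t. t \<in> {0..1} \<Longrightarrow> t \<in> I \<Longrightarrow> t \<in> J \<Longrightarrow> False"
    and "0 \<in> I" "1 \<in> J"
    and oI: "\<And>t. t \<in> {0..1} \<Longrightarrow> t \<in> I \<Longrightarrow> \<exists>e>0. \<forall>t'\<in>{0..1}. \<bar>t' - t\<bar> < e \<longrightarrow> t' \<in> I"
    and oJ: "\<And>t. t \<in> {0..1} \<Longrightarrow> t \<in> J \<Longrightarrow> \<exists>e>0. \<forall>t'\<in>{0..1}. \<bar>t' - t\<bar> < e \<longrightarrow> t' \<in> J"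
  shows False
proof -
  have "connected {0..1::real}" by simp
  moreover have "openin (top_of_set {0..1}) (I \<inter> {0..1})"
    unfolding openin_euclidean_subtopology_iff dist_real_def using oI by fastforce
  moreover have "openin (top_of_set {0..1}) (J \<inter> {0..1})"
    unfolding openin_euclidean_subtopology_iff dist_real_def using oJ by fastforce
  moreover have "{0..1} \<subseteq> (I \<inter> {0..1}) \<union> (J \<inter> {0..1})" using cover by (metis Int_iff Un_iff subsetI)
  moreover have "(I \<inter> {0..1}) \<inter> (J \<inter> {0..1}) = {}" using disj by blast
  moreover have "I \<inter> {0..1} \<noteq> {}" "J \<inter> {0..1} \<noteq> {}" using assms(3,4) by auto
  ultimately show False unfolding connected_openin by blast
qed

lemma mmhyp_sub:
  assumes h: "mmhyp X Y f" and y: "y \<in> Y"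
  shows "mmhyp {x\<in>X. f x y \<le> c} Y f"
proof -
  let ?X = "{x\<in>X. f x y \<le> c}"
  have cX: "compact X" and cy: "continuous_on X (\<lambda>x. f x y)" using h y by (auto simp: mmhyp_def)
  have "closedin (top_of_set X) (X \<inter> (\<lambda>x. f x y) -` {..c})"
    by (rule continuous_closedin_preimage[OF cy]) auto
  moreover have "X \<inter> (\<lambda>x. f x y) -` {..c} = ?X" by auto
  ultimately have "compact ?X" using closedin_compact[OF cX] by metis
  moreover have "cvxset ?X"
    unfolding cvxset_def
  proof (intro ballI)
    fix p q and s :: real assume p: "p \<in> ?X" and q: "q \<in> ?X" and s: "s \<in> {0..1}"
    have "seg p q s \<in> X" using h p q s by (auto simp: mmhyp_def cvxset_def)
    moreover have "f (seg p q s) y \<le> (1 - s) * f p y + s * f q y"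
      using h p q s y by (auto simp: mmhyp_def)
    moreover have "(1 - s) * f p y + s * f q y \<le> max (f p y) (f q y)"
      using s by (intro convex_le_max) auto
    ultimately show "seg p q s \<in> ?X" using p q by auto
  qed
  ultimately show ?thesis using h unfolding mmhyp_def
    by (auto intro: continuous_on_subset)
qed

lemma mm_two:
  assumes h: "mmhyp X Y f" and y1: "y1 \<in> Y" and y2: "y2 \<in> Y"
    and gt: "\<forall>x\<in>X. \<alpha> < max (f x y1) (f x y2)"
  shows "\<exists>y0\<in>Y. \<forall>x\<in>X. \<alpha> < f x y0"
proof (cases "X = {}")
  case True then show ?thesis using y1 by auto
next
  case False
  have cX: "compact X" and cvX: "cvxset X" and cvY: "cvxset Y"
    and contX: "\<And>y. y \<in> Y \<Longrightarrow> continuous_on X (\<lambda>x. f x y)"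
    and contY: "\<And>x. x \<in> X \<Longrightarrow> continuous_on Y (\<lambda>y. f x y)"
    and cvx: "\<And>y p q s. y \<in> Y \<Longrightarrow> p \<in> X \<Longrightarrow> q \<in> X \<Longrightarrow> s \<in> {0..1} \<Longrightarrow>
                 f (seg p q s) y \<le> (1 - s) * f p y + s * f q y"
    and ccv: "\<And>x p q t. x \<in> X \<Longrightarrow> p \<in> Y \<Longrightarrow> q \<in> Y \<Longrightarrow> t \<in> {0..1} \<Longrightarrow>
                 (1 - t) * f x p + t * f x q \<le> f x (seg p q t)"
    using h by (auto simp: mmhyp_def)
  have segX: "\<And>p q s. p \<in> X \<Longrightarrow> q \<in> X \<Longrightarrow> s \<in> {0..1} \<Longrightarrow> seg p q s \<in> X"
    using cvX by (auto simp: cvxset_def)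
  define z where "z t = seg y1 y2 t" for t
  have zY: "\<And>t. t \<in> {0..1} \<Longrightarrow> z t \<in> Y" using cvY y1 y2 by (auto simp: cvxset_def z_def)
  have "continuous_on X (\<lambda>x. max (f x y1) (f x y2))"
    using contX[OF y1] contX[OF y2] by (intro continuous_intros)
  then obtain x0 where x0: "x0 \<in> X" "\<And>x. x \<in> X \<Longrightarrow> max (f x0 y1) (f x0 y2) \<le> max (f x y1) (f x y2)"
    using continuous_attains_inf[OF cX False] by blast
  define \<beta> where "\<beta> = (\<alpha> + max (f x0 y1) (f x0 y2)) / 2"
  have ab: "\<alpha> < \<beta>" using gt x0(1) by (auto simp: \<beta>_def)
  have hb: "\<And>x. x \<in> X \<Longrightarrow> \<beta> < max (f x y1) (f x y2)"
  proof -
    fix x assume "x \<in> X"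
    have "max (f x0 y1) (f x0 y2) \<le> max (f x y1) (f x y2)" using x0(2)[OF \<open>x \<in> X\<close>] .
    moreover have "\<alpha> < max (f x0 y1) (f x0 y2)" using gt x0(1) by blast
    moreover have "\<And>a b c::real. b \<le> c \<Longrightarrow> a < b \<Longrightarrow> (a + b) / 2 < c" by (simp add: field_simps)
    ultimately show "\<beta> < max (f x y1) (f x y2)" unfolding \<beta>_def by blast
  qed
  have minle: "\<And>x t. x \<in> X \<Longrightarrow> t \<in> {0..1} \<Longrightarrow> min (f x y1) (f x y2) \<le> f x (z t)"
  proof -
    fix x and t :: real assume x: "x \<in> X" and t: "t \<in> {0..1}"
    have "min (f x y1) (f x y2) \<le> (1 - t) * f x y1 + t * f x y2"
      using t by (intro convex_ge_min) auto
    also have "\<dots> \<le> f x (z t)" unfolding z_def by (rule ccv[OF x y1 y2 t])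
    finally show "min (f x y1) (f x y2) \<le> f x (z t)" .
  qed
  show ?thesis
  proof (rule ccontr)
    assume "\<not> ?thesis"
    then have neg: "\<And>w. w \<in> Y \<Longrightarrow> \<exists>x\<in>X. f x w \<le> \<alpha>" by (auto simp: not_less)
    have K: "f x' y1 \<le> \<beta>"
      if t: "t \<in> {0..1}" and x: "x \<in> X" and x': "x' \<in> X" and fx: "f x (z t) < \<beta>"
        and fx': "f x' (z t) < \<beta>" and x1: "f x y1 \<le> \<beta>" for t x x'
    proof (rule ccontr)
      assume nx': "\<not> f x' y1 \<le> \<beta>"
      define h1 where "h1 s = f (seg x x' s) y1" for s
      define h2 where "h2 s = f (seg x x' s) y2" for s
      have c1: "continuous_on {0..1} h1" unfolding h1_def
        using seg_cont_comp[OF cvX x x' contX[OF y1]] .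
      have c2: "continuous_on {0..1} h2" unfolding h2_def
        using seg_cont_comp[OF cvX x x' contX[OF y2]] .
      have lt: "min (h1 s) (h2 s) < \<beta>" if s: "s \<in> {0..1}" for s
      proof -
        have "min (h1 s) (h2 s) \<le> f (seg x x' s) (z t)"
          unfolding h1_def h2_def using minle[OF segX[OF x x' s] t] .
        also have "\<dots> \<le> (1 - s) * f x (z t) + s * f x' (z t)"
          using cvx[OF zY[OF t] x x' s] .
        also have "\<dots> \<le> max (f x (z t)) (f x' (z t))" using s by (intro convex_le_max) auto
        also have "\<dots> < \<beta>" using fx fx' by auto
        finally show ?thesis .
      qed
      have gt2: "\<beta> < max (h1 s) (h2 s)" if s: "s \<in> {0..1}" for s
        unfolding h1_def h2_def using hb[OF segX[OF x x' s]] .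
      have "min (h1 1) (h2 1) < \<beta>" using lt by auto
      then have "h2 1 \<le> \<beta>" using nx' by (auto simp: h1_def)
      moreover have "h1 0 \<le> \<beta>" using x1 by (simp add: h1_def)
      ultimately show False
        using conn01[OF c1 c2, of \<beta>] lt gt2 by force
    qed
    define I where "I = {t. \<forall>x\<in>X. f x (z t) \<le> \<alpha> \<longrightarrow> f x y1 \<le> \<beta>}"
    define J where "J = {t. \<forall>x\<in>X. f x (z t) \<le> \<alpha> \<longrightarrow> f x y2 \<le> \<beta>}"
    have K2: "f x' y2 \<le> \<beta>"
      if t: "t \<in> {0..1}" and x: "x \<in> X" and x': "x' \<in> X" and fx: "f x (z t) < \<beta>"
        and fx': "f x' (z t) < \<beta>" and x2: "f x y2 \<le> \<beta>" for t x x'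
    proof (rule ccontr)
      assume nx': "\<not> f x' y2 \<le> \<beta>"
      have "min (f x' y1) (f x' y2) < \<beta>" using minle[OF x' t] fx' by auto
      then have "f x' y1 \<le> \<beta>" using nx' by auto
      then have "f x y1 \<le> \<beta>" using K[OF t x' x fx' fx] by auto
      then show False using hb[OF x] x2 by auto
    qed
    have cover: "t \<in> I \<or> t \<in> J" if t: "t \<in> {0..1}" for t
    proof (rule disjCI)
      assume "t \<notin> J"
      then obtain x where x: "x \<in> X" "f x (z t) \<le> \<alpha>" "\<not> f x y2 \<le> \<beta>" by (auto simp: J_def)
      show "t \<in> I" unfolding I_def
      proof (intro CollectI ballI impI)
        fix x' assume x': "x' \<in> X" "f x' (z t) \<le> \<alpha>"
        show "f x' y1 \<le> \<beta>"
        proof (rule ccontr)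
          assume nx': "\<not> f x' y1 \<le> \<beta>"
          have "min (f x' y1) (f x' y2) \<le> \<alpha>" using minle[OF x'(1) t] x'(2) by auto
          then have "f x' y2 \<le> \<beta>" using nx' ab by auto
          then have "f x y2 \<le> \<beta>" using K2[OF t x'(1) x(1)] x'(2) x(2) ab by auto
          then show False using x(3) by auto
        qed
      qed
    qed
    have disj: False if t: "t \<in> {0..1}" "t \<in> I" "t \<in> J" for t
    proof -
      obtain x where x: "x \<in> X" "f x (z t) \<le> \<alpha>" using neg[OF zY[OF t(1)]] by auto
      then have "f x y1 \<le> \<beta>" "f x y2 \<le> \<beta>" using t by (auto simp: I_def J_def)
      then show False using hb[OF x(1)] by auto
    qed
    have zcont: "continuous_on {0..1} (\<lambda>t. f x (z t))" if "x \<in> X" for x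
      unfolding z_def using seg_cont_comp[OF cvY y1 y2 contY[OF that]] .
    have near: "\<exists>e>0. \<forall>t'\<in>{0..1}. \<bar>t' - t\<bar> < e \<longrightarrow> f x (z t') < \<beta>"
      if t: "t \<in> {0..1}" and x: "x \<in> X" "f x (z t) \<le> \<alpha>" for t x
    proof -
      obtain d where d: "d > 0" "\<forall>t'\<in>{0..1}. dist t' t < d \<longrightarrow> dist (f x (z t')) (f x (z t)) < \<beta> - \<alpha>"
        using zcont[OF x(1)] t ab unfolding continuous_on_iff by (meson diff_gt_0_iff_gt)
      show ?thesis
      proof (intro exI[of _ d] conjI ballI impI)
        fix t' assume "t' \<in> {0..1}" "\<bar>t' - t\<bar> < d"
        then have "dist (f x (z t')) (f x (z t)) < \<beta> - \<alpha>" using d by (auto simp: dist_real_def)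
        then show "f x (z t') < \<beta>" using x(2) by (auto simp: dist_real_def)
      qed (use d in auto)
    qed
    have oI: "\<exists>e>0. \<forall>t'\<in>{0..1}. \<bar>t' - t\<bar> < e \<longrightarrow> t' \<in> I" if t: "t \<in> {0..1}" "t \<in> I" for t
    proof -
      obtain x where x: "x \<in> X" "f x (z t) \<le> \<alpha>" using neg[OF zY[OF t(1)]] by auto
      then have x1: "f x y1 \<le> \<beta>" using t by (auto simp: I_def)
      obtain e where e: "e > 0" "\<forall>t'\<in>{0..1}. \<bar>t' - t\<bar> < e \<longrightarrow> f x (z t') < \<beta>"
        using near[OF t(1) x] by auto
      show ?thesis
      proof (intro exI[of _ e] conjI ballI impI)
        fix t' assume t': "t' \<in> {0..1}" "\<bar>t' - t\<bar> < e"
        show "t' \<in> I" unfolding I_def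
        proof (intro CollectI ballI impI)
          fix x' assume "x' \<in> X" "f x' (z t') \<le> \<alpha>"
          then show "f x' y1 \<le> \<beta>" using K[OF t'(1) x(1) \<open>x' \<in> X\<close>] e t' x1 ab by force
        qed
      qed (use e in auto)
    qed
    have oJ: "\<exists>e>0. \<forall>t'\<in>{0..1}. \<bar>t' - t\<bar> < e \<longrightarrow> t' \<in> J" if t: "t \<in> {0..1}" "t \<in> J" for t
    proof -
      obtain x where x: "x \<in> X" "f x (z t) \<le> \<alpha>" using neg[OF zY[OF t(1)]] by auto
      then have x2: "f x y2 \<le> \<beta>" using t by (auto simp: J_def)
      obtain e where e: "e > 0" "\<forall>t'\<in>{0..1}. \<bar>t' - t\<bar> < e \<longrightarrow> f x (z t') < \<beta>"
        using near[OF t(1) x] by auto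
      show ?thesis
      proof (intro exI[of _ e] conjI ballI impI)
        fix t' assume t': "t' \<in> {0..1}" "\<bar>t' - t\<bar> < e"
        show "t' \<in> J" unfolding J_def
        proof (intro CollectI ballI impI)
          fix x' assume "x' \<in> X" "f x' (z t') \<le> \<alpha>"
          then show "f x' y2 \<le> \<beta>" using K2[OF t'(1) x(1) \<open>x' \<in> X\<close>] e t' x2 ab by force
        qed
      qed (use e in auto)
    qed
    have "0 \<in> I" using ab by (auto simp: I_def z_def)
    moreover have "1 \<in> J" using ab by (auto simp: J_def z_def)
    ultimately show False using open_split01[of I J] cover disj oI oJ by blast
  qed
qed

lemma mm_finite:
  assumes "finite F" "F \<noteq> {}"
  shows "F \<subseteq> Y \<Longrightarrow> mmhyp X Y f \<Longrightarrow> (\<forall>x\<in>X. \<exists>y\<in>F. \<alpha> < f x y) \<Longrightarrow> \<exists>y0\<in>Y. \<forall>x\<in>X. \<alpha> < f x y0"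
  using assms
proof (induction F arbitrary: X rule: finite_ne_induct)
  case (singleton y) then show ?case by auto
next
  case (insert y F)
  let ?X = "{x\<in>X. f x y \<le> \<alpha>}"
  have yY: "y \<in> Y" using insert by auto
  have "mmhyp ?X Y f" using mmhyp_sub[OF insert.prems(2) yY] .
  moreover have "\<forall>x\<in>?X. \<exists>y'\<in>F. \<alpha> < f x y'" using insert.prems(3) by force
  ultimately obtain y0 where y0: "y0 \<in> Y" "\<forall>x\<in>?X. \<alpha> < f x y0"
    using insert.IH insert.prems(1) by blast
  have "\<forall>x\<in>X. \<alpha> < max (f x y0) (f x y)" using y0 by force
  then show ?case using mm_two[OF insert.prems(2) y0(1) yY] by blast
qed

lemma minimax:
  assumes h: "mmhyp X Y f" and Yne: "Y \<noteq> {}"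
    and cov: "\<forall>x\<in>X. \<exists>y\<in>Y. \<alpha> < f x y"
  shows "\<exists>y0\<in>Y. \<forall>x\<in>X. \<alpha> < f x y0"
proof -
  have cX: "compact X" and contX: "\<And>y. y \<in> Y \<Longrightarrow> continuous_on X (\<lambda>x. f x y)"
    using h by (auto simp: mmhyp_def)
  have "\<exists>U. open U \<and> U \<inter> X = (\<lambda>x. f x y) -` {\<alpha><..} \<inter> X" if "y \<in> Y" for y
    using contX[OF that] unfolding continuous_on_open_invariant by auto
  then obtain U where U: "\<And>y. y \<in> Y \<Longrightarrow> open (U y) \<and> U y \<inter> X = (\<lambda>x. f x y) -` {\<alpha><..} \<inter> X"
    by metis
  have "X \<subseteq> (\<Union>y\<in>Y. U y)" using cov U by fastforce
  then obtain F where F: "F \<subseteq> Y" "finite F" "X \<subseteq> (\<Union>y\<in>F. U y)"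
    using compactE_image[OF cX, of Y U] U by blast
  show ?thesis
  proof (cases "F = {}")
    case True then have "X = {}" using F by auto
    then show ?thesis using Yne by auto
  next
    case False
    have "\<forall>x\<in>X. \<exists>y\<in>F. \<alpha> < f x y"
    proof
      fix x assume x: "x \<in> X"
      then obtain y where y: "y \<in> F" "x \<in> U y" using F by auto
      then have "x \<in> U y \<inter> X" using x by auto
      then show "\<exists>y\<in>F. \<alpha> < f x y" using U[of y] y F by auto
    qed
    then show ?thesis using mm_finite[OF F(2) False F(1) h] by blast
  qed
qed



lemma xlnx_lim: "((\<lambda>x::real. x * ln x) \<longlongrightarrow> 0) (at_right 0)"
  by real_asymp

lemma xlnx_cont: "continuous_on {0..} (\<lambda>x::real. x * ln x)"
proof -
  have "continuous (at x within {0..}) (\<lambda>x::real. x * ln x)" if x: "x \<in> {0..}" for x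
  proof (cases "x = 0")
    case True
    have "at (0::real) within {0..} = at_right 0"
      by (simp add: at_within_Ici_at_right)
    then show ?thesis using True xlnx_lim by (simp add: continuous_within)
  next
    case False
    then have "x > 0" using x by auto
    then have "isCont (\<lambda>x::real. x * ln x) x" by (intro continuous_intros) auto
    then show ?thesis using continuous_at_imp_continuous_at_within by blast
  qed
  then show ?thesis using continuous_on_eq_continuous_within by blast
qed

lemma xlnx_tangent:
  fixes p m :: real
  assumes "0 \<le> p" "0 < m"
  shows "p * ln m + p - m \<le> p * ln p"
proof (cases "p = 0")
  case True then show ?thesis using assms by simp
next
  case False
  then have p: "p > 0" using assms by auto
  have "ln (m / p) \<le> m / p - 1" using p assms by (intro ln_le_minus_one) auto
  then have "ln m - ln p \<le> m / p - 1" using p assms by (simp add: ln_div)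
  then have "p * (ln m - ln p) \<le> p * (m / p - 1)" using p by (intro mult_left_mono) auto
  then show ?thesis using p by (simp add: algebra_simps)
qed

lemma xlnx_convex:
  fixes p q t :: real
  assumes p: "0 \<le> p" and q: "0 \<le> q" and t: "0 \<le> t" "t \<le> 1"
  shows "((1 - t) * p + t * q) * ln ((1 - t) * p + t * q) \<le> (1 - t) * (p * ln p) + t * (q * ln q)"
proof -
  define m where "m = (1 - t) * p + t * q"
  have m0: "0 \<le> m" using p q t by (simp add: m_def)
  show ?thesis
  proof (cases "m = 0")
    case True
    have a: "(1 - t) * p = 0" and b: "t * q = 0"
      using True p q t unfolding m_def by (smt (verit) mult_nonneg_nonneg)+
    have "(1 - t) * (p * ln p) = 0" using a by (metis mult.assoc mult_zero_left)
    moreover have "t * (q * ln q) = 0" using b by (metis mult.assoc mult_zero_left)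
    moreover have "((1 - t) * p + t * q) * ln ((1 - t) * p + t * q) = 0"
      using True by (simp add: m_def)
    ultimately show ?thesis by linarith
  next
    case False
    then have mpos: "0 < m" using m0 by auto
    have "(1 - t) * (p * ln m + p - m) \<le> (1 - t) * (p * ln p)"
      using xlnx_tangent[OF p mpos] t by (intro mult_left_mono) auto
    moreover have "t * (q * ln m + q - m) \<le> t * (q * ln q)"
      using xlnx_tangent[OF q mpos] t by (intro mult_left_mono) auto
    moreover have "(1 - t) * (p * ln m + p - m) + t * (q * ln m + q - m) = m * ln m"
      unfolding m_def by (simp add: algebra_simps)
    ultimately show ?thesis unfolding m_def[symmetric] by linarith
  qed
qed

lemma psimplex_le1:
  assumes "finite A" "\<mu> \<in> psimplex A"
  shows "\<mu> a \<le> 1" "0 \<le> \<mu> a"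
proof -
  show "0 \<le> \<mu> a" using assms by (cases "a \<in> A") (auto simp: psimplex_def)
  show "\<mu> a \<le> 1"
  proof (cases "a \<in> A")
    case True
    have "\<mu> a \<le> (\<Sum>b\<in>A. \<mu> b)"
      using assms True by (intro member_le_sum) (auto simp: psimplex_def)
    then show ?thesis using assms by (auto simp: psimplex_def)
  next
    case False then show ?thesis using assms by (auto simp: psimplex_def)
  qed
qed

lemma entropy_nonneg:
  assumes "finite A" "\<mu> \<in> psimplex A"
  shows "0 \<le> entropy A \<mu>"
proof -
  have "\<mu> a * ln (\<mu> a) \<le> 0" for a
  proof (cases "\<mu> a = 0")
    case False
    then have "0 < \<mu> a" using psimplex_le1(2)[OF assms, of a] by linarith
    then have "ln (\<mu> a) \<le> 0" using psimplex_le1[OF assms] by simp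
    then show ?thesis using psimplex_le1[OF assms] by (simp add: mult_nonneg_nonpos)
  qed simp
  then have "(\<Sum>a\<in>A. \<mu> a * ln (\<mu> a)) \<le> 0" by (simp add: sum_nonpos)
  then show ?thesis by (simp add: entropy_def)
qed

lemma entropy_le:
  assumes "finite A" "A \<noteq> {}" "\<mu> \<in> psimplex A"
  shows "entropy A \<mu> \<le> ln (card A)"
proof -
  define n where "n = real (card A)"
  have n: "0 < n" using assms by (simp add: n_def card_gt_0_iff)
  have "(\<Sum>a\<in>A. \<mu> a * ln (1 / n) + \<mu> a - 1 / n) \<le> (\<Sum>a\<in>A. \<mu> a * ln (\<mu> a))"
    using xlnx_tangent[OF psimplex_le1(2)[OF assms(1,3)], of "1/n"] n by (intro sum_mono) auto
  moreover have "(\<Sum>a\<in>A. \<mu> a * ln (1 / n) + \<mu> a - 1 / n) = - ln n"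
  proof -
    have s1: "(\<Sum>a\<in>A. \<mu> a) = 1" using assms by (simp add: psimplex_def)
    have "(\<Sum>a\<in>A. \<mu> a * ln (1 / n) + \<mu> a - 1 / n)
        = (\<Sum>a\<in>A. \<mu> a) * ln (1 / n) + (\<Sum>a\<in>A. \<mu> a) - (\<Sum>a\<in>A. 1 / n)"
      by (simp add: sum.distrib sum_subtractf sum_distrib_right)
    also have "\<dots> = - ln n" using s1 n by (simp add: n_def ln_div)
    finally show ?thesis .
  qed
  ultimately show ?thesis by (simp add: entropy_def n_def)
qed

lemma psimplex_ne:
  assumes "A \<noteq> {}" "finite A"
  shows "psimplex A \<noteq> {}"
proof -
  obtain a0 where a0: "a0 \<in> A" using assms by auto
  have "(\<lambda>a. if a = a0 then 1 else 0) \<in> psimplex A"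
    using a0 assms by (auto simp: psimplex_def)
  then show ?thesis by auto
qed

lemma psimplex_cvx: "cvxset (psimplex A)"
  unfolding cvxset_def
proof (intro ballI)
  fix p q and s :: real assume p: "p \<in> psimplex A" and q: "q \<in> psimplex A" and s: "s \<in> {0..1}"
  have "(\<Sum>a\<in>A. seg p q s a) = (1 - s) * (\<Sum>a\<in>A. p a) + s * (\<Sum>a\<in>A. q a)"
    by (simp add: seg_def sum.distrib sum_distrib_left)
  also have "\<dots> = 1" using p q by (simp add: psimplex_def)
  finally have "(\<Sum>a\<in>A. seg p q s a) = 1" .
  moreover have "\<forall>a\<in>A. 0 \<le> seg p q s a" using p q s by (auto simp: psimplex_def seg_def)
  moreover have "\<forall>a. a \<notin> A \<longrightarrow> seg p q s a = 0" using p q by (auto simp: psimplex_def seg_def)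
  ultimately show "seg p q s \<in> psimplex A" by (simp add: psimplex_def)
qed

lemma psimplex_compact:
  assumes "finite A"
  shows "compact (psimplex A)"
proof -
  let ?K = "Pi\<^sub>E UNIV (\<lambda>_::'a. {0..1::real})"
  have "compactin (product_topology (\<lambda>_. euclidean) UNIV) ?K"
    by (subst compactin_PiE) (auto simp: compactin_euclidean_iff)
  then have cK: "compact ?K" by (simp add: euclidean_product_topology compactin_euclidean_iff)
  have eq: "psimplex A = {\<mu>. \<forall>a. a \<in> A \<longrightarrow> 0 \<le> \<mu> a} \<inter> {\<mu>. \<forall>a. a \<notin> A \<longrightarrow> \<mu> a = 0}
      \<inter> {\<mu>. (\<Sum>a\<in>A. \<mu> a) = 1}"
    by (auto simp: psimplex_def)
  have cc: "continuous_on UNIV (\<lambda>\<mu>::'a\<Rightarrow>real. \<mu> a)" for a by simp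
  have c1: "closed {\<mu>::'a\<Rightarrow>real. 0 \<le> \<mu> a}" for a
    by (rule closed_Collect_le[OF continuous_on_const cc])
  have c2: "closed {\<mu>::'a\<Rightarrow>real. \<mu> a = 0}" for a
    by (rule closed_Collect_eq[OF cc continuous_on_const])
  have "closed {\<mu>::'a\<Rightarrow>real. a \<in> A \<longrightarrow> 0 \<le> \<mu> a}" for a
    using c1[of a] by (cases "a \<in> A") simp_all
  then have "closed {\<mu>::'a\<Rightarrow>real. \<forall>a. a \<in> A \<longrightarrow> 0 \<le> \<mu> a}"
    by (rule closed_Collect_all)
  moreover have "closed {\<mu>::'a\<Rightarrow>real. a \<notin> A \<longrightarrow> \<mu> a = 0}" for a
    using c2[of a] by (cases "a \<in> A") simp_all
  then have "closed {\<mu>::'a\<Rightarrow>real. \<forall>a. a \<notin> A \<longrightarrow> \<mu> a = 0}"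
    by (rule closed_Collect_all)
  moreover have "closed {\<mu>::'a\<Rightarrow>real. (\<Sum>a\<in>A. \<mu> a) = 1}"
    by (rule closed_Collect_eq[OF continuous_on_sum continuous_on_const]) (rule cc)
  ultimately have cl: "closed (psimplex A)" unfolding eq by (intro closed_Int)
  have "psimplex A \<subseteq> ?K" using psimplex_le1[OF assms] by (auto simp: PiE_iff)
  then have "psimplex A = ?K \<inter> psimplex A" by auto
  then show ?thesis using compact_Int_closed[OF cK cl] by metis
qed

lemma coord_cont: "continuous_on S (\<lambda>\<mu>::'a\<Rightarrow>real. \<mu> a)"
  by (rule continuous_on_subset[OF continuous_on_product_coordinates]) simp

lemma entropy_cont:
  assumes "finite A"
  shows "continuous_on (psimplex A) (entropy A)"
proof -
  have "continuous_on (psimplex A) (\<lambda>\<mu>. \<mu> a * ln (\<mu> a))" for a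
  proof -
    have "(\<lambda>\<mu>. \<mu> a) ` psimplex A \<subseteq> {0..}" using psimplex_le1[OF assms] by auto
    then show ?thesis by (rule continuous_on_compose2[OF xlnx_cont coord_cont])
  qed
  then have "continuous_on (psimplex A) (\<lambda>\<mu>. \<Sum>a\<in>A. \<mu> a * ln (\<mu> a))"
    by (rule continuous_on_sum)
  then have "continuous_on (psimplex A) (\<lambda>\<mu>. - (\<Sum>a\<in>A. \<mu> a * ln (\<mu> a)))"
    by (rule continuous_on_minus)
  then show ?thesis unfolding entropy_def[abs_def] .
qed

lemma bilin_cont1: "continuous_on S (\<lambda>\<mu>. bilin A B R \<mu> \<nu>)"
  unfolding bilin_def
  by (intro continuous_on_sum continuous_on_mult_right coord_cont)

lemma bilin_cont2: "continuous_on S (\<lambda>\<nu>. bilin A B R \<mu> \<nu>)"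
  unfolding bilin_def
  by (intro continuous_on_sum continuous_on_mult_left coord_cont)

lemma bilin_seg1: "bilin A B R (seg p q t) \<nu> = (1 - t) * bilin A B R p \<nu> + t * bilin A B R q \<nu>"
proof -
  have "bilin A B R (seg p q t) \<nu> = (\<Sum>a\<in>A. \<Sum>b\<in>B. (1 - t) * (p a * R a b * \<nu> b) + t * (q a * R a b * \<nu> b))"
    unfolding bilin_def seg_def by (intro sum.cong refl) (simp add: distrib_right)
  also have "\<dots> = (1 - t) * bilin A B R p \<nu> + t * bilin A B R q \<nu>"
    unfolding bilin_def by (simp add: sum.distrib sum_distrib_left)
  finally show ?thesis .
qed

lemma bilin_seg2: "bilin A B R \<mu> (seg p q t) = (1 - t) * bilin A B R \<mu> p + t * bilin A B R \<mu> q"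
proof -
  have "bilin A B R \<mu> (seg p q t) = (\<Sum>a\<in>A. \<Sum>b\<in>B. (1 - t) * (\<mu> a * R a b * p b) + t * (\<mu> a * R a b * q b))"
    unfolding bilin_def seg_def by (intro sum.cong refl) (simp add: distrib_left)
  also have "\<dots> = (1 - t) * bilin A B R \<mu> p + t * bilin A B R \<mu> q"
    unfolding bilin_def by (simp add: sum.distrib sum_distrib_left)
  finally show ?thesis .
qed

lemma entropy_concave:
  assumes "finite A" "p \<in> psimplex A" "q \<in> psimplex A" "0 \<le> t" "t \<le> 1"
  shows "(1 - t) * entropy A p + t * entropy A q \<le> entropy A (seg p q t)"
proof -
  have "(\<Sum>a\<in>A. seg p q t a * ln (seg p q t a)) \<le> (\<Sum>a\<in>A. (1 - t) * (p a * ln (p a)) + t * (q a * ln (q a)))"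
    unfolding seg_def using assms psimplex_le1[OF assms(1)]
    by (intro sum_mono xlnx_convex) auto
  also have "\<dots> = (1 - t) * (\<Sum>a\<in>A. p a * ln (p a)) + t * (\<Sum>a\<in>A. q a * ln (q a))"
    by (simp add: sum.distrib sum_distrib_left)
  finally show ?thesis by (simp add: entropy_def)
qed

definition gf :: "real \<Rightarrow> real \<Rightarrow> 'a set \<Rightarrow> 'b set \<Rightarrow> ('a \<Rightarrow> 'b \<Rightarrow> real) \<Rightarrow> ('a \<Rightarrow> real) \<Rightarrow> ('b \<Rightarrow> real) \<Rightarrow> real" where
  "gf ti tj A B R \<mu> \<nu> = bilin A B R \<mu> \<nu> + ti * entropy A \<mu> - tj * entropy B \<nu>"

lemma rval_gf: "rval ti tj A B R = (SUP \<mu>\<in>psimplex A. INF \<nu>\<in>psimplex B. gf ti tj A B R \<mu> \<nu>)"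
  by (simp add: rval_def gf_def)

lemma val_rval: "val A B R = rval 0 0 A B R"
  by (simp add: rval_def val_def)

lemma mmhyp_game:
  assumes A: "finite A" and B: "finite B" and ti: "0 \<le> ti" and tj: "0 \<le> tj"
  shows "mmhyp (psimplex B) (psimplex A) (\<lambda>\<nu> \<mu>. gf ti tj A B R \<mu> \<nu>)"
  unfolding mmhyp_def
proof (intro conjI ballI)
  show "compact (psimplex B)" using psimplex_compact[OF B] .
  show "cvxset (psimplex B)" "cvxset (psimplex A)" by (rule psimplex_cvx)+
next
  fix \<mu> assume "\<mu> \<in> psimplex A"
  have "continuous_on (psimplex B) (\<lambda>\<nu>. bilin A B R \<mu> \<nu> + ti * entropy A \<mu> - tj * entropy B \<nu>)"
    by (intro continuous_on_diff continuous_on_add continuous_on_const continuous_on_mult_left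
        bilin_cont2 entropy_cont[OF B])
  then show "continuous_on (psimplex B) (\<lambda>\<nu>. gf ti tj A B R \<mu> \<nu>)" by (simp add: gf_def)
next
  fix \<nu> assume "\<nu> \<in> psimplex B"
  have "continuous_on (psimplex A) (\<lambda>\<mu>. bilin A B R \<mu> \<nu> + ti * entropy A \<mu> - tj * entropy B \<nu>)"
    by (intro continuous_on_diff continuous_on_add continuous_on_const continuous_on_mult_left
        bilin_cont1 entropy_cont[OF A])
  then show "continuous_on (psimplex A) (\<lambda>\<mu>. gf ti tj A B R \<mu> \<nu>)" by (simp add: gf_def)
next
  fix \<mu> p q and s :: real
  assume \<mu>: "\<mu> \<in> psimplex A" and p: "p \<in> psimplex B" and q: "q \<in> psimplex B" and s: "s \<in> {0..1}"
  have "tj * ((1 - s) * entropy B p + s * entropy B q) \<le> tj * entropy B (seg p q s)"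
    using entropy_concave[OF B p q] s tj by (intro mult_left_mono) auto
  then show "gf ti tj A B R \<mu> (seg p q s) \<le> (1 - s) * gf ti tj A B R \<mu> p + s * gf ti tj A B R \<mu> q"
    unfolding gf_def bilin_seg2 by (simp add: algebra_simps)
next
  fix \<nu> p q and t :: real
  assume \<nu>: "\<nu> \<in> psimplex B" and p: "p \<in> psimplex A" and q: "q \<in> psimplex A" and t: "t \<in> {0..1}"
  have "ti * ((1 - t) * entropy A p + t * entropy A q) \<le> ti * entropy A (seg p q t)"
    using entropy_concave[OF A p q] t ti by (intro mult_left_mono) auto
  then show "(1 - t) * gf ti tj A B R p \<nu> + t * gf ti tj A B R q \<nu> \<le> gf ti tj A B R (seg p q t) \<nu>"
    unfolding gf_def bilin_seg1 by (simp add: algebra_simps)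
qed

lemma bilin_bound:
  assumes A: "finite A" and B: "finite B" and \<mu>: "\<mu> \<in> psimplex A" and \<nu>: "\<nu> \<in> psimplex B"
  shows "\<bar>bilin A B R \<mu> \<nu>\<bar> \<le> (\<Sum>a\<in>A. \<Sum>b\<in>B. \<bar>R a b\<bar>)"
proof -
  have "\<bar>bilin A B R \<mu> \<nu>\<bar> \<le> (\<Sum>a\<in>A. \<bar>\<Sum>b\<in>B. \<mu> a * R a b * \<nu> b\<bar>)"
    unfolding bilin_def by (rule sum_abs)
  also have "\<dots> \<le> (\<Sum>a\<in>A. \<Sum>b\<in>B. \<bar>\<mu> a * R a b * \<nu> b\<bar>)"
    by (intro sum_mono sum_abs)
  also have "\<dots> \<le> (\<Sum>a\<in>A. \<Sum>b\<in>B. \<bar>R a b\<bar>)"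
  proof (intro sum_mono)
    fix a b
    have "\<bar>\<mu> a\<bar> \<le> 1" "\<bar>\<nu> b\<bar> \<le> 1"
      using psimplex_le1[OF A \<mu>, of a] psimplex_le1[OF B \<nu>, of b] by auto
    then have "\<bar>\<mu> a\<bar> * \<bar>R a b\<bar> * \<bar>\<nu> b\<bar> \<le> 1 * \<bar>R a b\<bar> * 1"
      by (intro mult_mono) auto
    then show "\<bar>\<mu> a * R a b * \<nu> b\<bar> \<le> \<bar>R a b\<bar>" by (simp add: abs_mult)
  qed
  finally show ?thesis .
qed

lemma gf_bound:
  assumes A: "finite A" "A \<noteq> {}" and B: "finite B" "B \<noteq> {}" and ti: "0 \<le> ti" and tj: "0 \<le> tj"
    and \<mu>: "\<mu> \<in> psimplex A" and \<nu>: "\<nu> \<in> psimplex B"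
  shows "\<bar>gf ti tj A B R \<mu> \<nu>\<bar> \<le> (\<Sum>a\<in>A. \<Sum>b\<in>B. \<bar>R a b\<bar>) + ti * ln (card A) + tj * ln (card B)"
proof -
  have "0 \<le> ti * entropy A \<mu>" "ti * entropy A \<mu> \<le> ti * ln (card A)"
    using entropy_nonneg[OF A(1) \<mu>] entropy_le[OF A \<mu>] ti by (auto intro: mult_left_mono)
  moreover have "0 \<le> tj * entropy B \<nu>" "tj * entropy B \<nu> \<le> tj * ln (card B)"
    using entropy_nonneg[OF B(1) \<nu>] entropy_le[OF B \<nu>] tj by (auto intro: mult_left_mono)
  moreover note bilin_bound[OF A(1) B(1) \<mu> \<nu>, of R]
  ultimately show ?thesis unfolding gf_def by linarith
qed

lemma G2:
  assumes A: "finite A" "A \<noteq> {}" and B: "finite B" "B \<noteq> {}" and ti: "0 \<le> ti" and tj: "0 \<le> tj"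
    and e: "0 < \<epsilon>"
  shows "\<exists>\<mu>\<in>psimplex A. \<forall>\<nu>\<in>psimplex B. rval ti tj A B R - \<epsilon> \<le> gf ti tj A B R \<mu> \<nu>"
proof -
  define M where "M = (\<Sum>a\<in>A. \<Sum>b\<in>B. \<bar>R a b\<bar>) + ti * ln (card A) + tj * ln (card B)"
  have bnd: "\<And>\<mu> \<nu>. \<mu> \<in> psimplex A \<Longrightarrow> \<nu> \<in> psimplex B \<Longrightarrow> \<bar>gf ti tj A B R \<mu> \<nu>\<bar> \<le> M"
    unfolding M_def by (rule gf_bound[OF A B ti tj])
  obtain \<nu>0 where \<nu>0: "\<nu>0 \<in> psimplex B" using psimplex_ne[OF B(2,1)] by auto
  have bb: "bdd_below ((\<lambda>\<nu>. gf ti tj A B R \<mu> \<nu>) ` psimplex B)" if "\<mu> \<in> psimplex A" for \<mu>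
    by (rule bdd_belowI2[where m="-M"]) (use bnd[OF that] in force)
  have ba: "bdd_above ((\<lambda>\<mu>. INF \<nu>\<in>psimplex B. gf ti tj A B R \<mu> \<nu>) ` psimplex A)"
  proof (rule bdd_aboveI2[where M=M])
    fix \<mu> assume \<mu>: "\<mu> \<in> psimplex A"
    have "(INF \<nu>\<in>psimplex B. gf ti tj A B R \<mu> \<nu>) \<le> gf ti tj A B R \<mu> \<nu>0"
      by (rule cINF_lower[OF bb[OF \<mu>] \<nu>0])
    also have "\<dots> \<le> M" using bnd[OF \<mu> \<nu>0] by auto
    finally show "(INF \<nu>\<in>psimplex B. gf ti tj A B R \<mu> \<nu>) \<le> M" .
  qed
  have "rval ti tj A B R - \<epsilon> < (SUP \<mu>\<in>psimplex A. INF \<nu>\<in>psimplex B. gf ti tj A B R \<mu> \<nu>)"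
    using e by (simp add: rval_gf)
  then obtain \<mu> where \<mu>: "\<mu> \<in> psimplex A" "rval ti tj A B R - \<epsilon> < (INF \<nu>\<in>psimplex B. gf ti tj A B R \<mu> \<nu>)"
    using less_cSUP_iff[OF psimplex_ne[OF A(2,1)] ba] by blast
  show ?thesis
  proof (intro bexI[OF _ \<mu>(1)] ballI)
    fix \<nu> assume "\<nu> \<in> psimplex B"
    then have "(INF \<nu>\<in>psimplex B. gf ti tj A B R \<mu> \<nu>) \<le> gf ti tj A B R \<mu> \<nu>"
      by (rule cINF_lower[OF bb[OF \<mu>(1)]])
    then show "rval ti tj A B R - \<epsilon> \<le> gf ti tj A B R \<mu> \<nu>" using \<mu>(2) by linarith
  qed
qed

lemma G1:
  assumes A: "finite A" "A \<noteq> {}" and B: "finite B" "B \<noteq> {}" and ti: "0 \<le> ti" and tj: "0 \<le> tj"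
    and e: "0 < \<epsilon>"
  shows "\<exists>\<nu>\<in>psimplex B. \<forall>\<mu>\<in>psimplex A. gf ti tj A B R \<mu> \<nu> \<le> rval ti tj A B R + \<epsilon>"
proof (rule ccontr)
  assume "\<not> ?thesis"
  then have cov: "\<forall>\<nu>\<in>psimplex B. \<exists>\<mu>\<in>psimplex A. rval ti tj A B R + \<epsilon> < gf ti tj A B R \<mu> \<nu>"
    by (auto simp: not_le)
  obtain \<mu>0 where \<mu>0: "\<mu>0 \<in> psimplex A" "\<forall>\<nu>\<in>psimplex B. rval ti tj A B R + \<epsilon> < gf ti tj A B R \<mu>0 \<nu>"
    using minimax[OF mmhyp_game[OF A(1) B(1) ti tj, of R] psimplex_ne[OF A(2,1)] cov] by blast
  define M where "M = (\<Sum>a\<in>A. \<Sum>b\<in>B. \<bar>R a b\<bar>) + ti * ln (card A) + tj * ln (card B)"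
  have bnd: "\<And>\<mu> \<nu>. \<mu> \<in> psimplex A \<Longrightarrow> \<nu> \<in> psimplex B \<Longrightarrow> \<bar>gf ti tj A B R \<mu> \<nu>\<bar> \<le> M"
    unfolding M_def by (rule gf_bound[OF A B ti tj])
  obtain \<nu>0 where \<nu>0: "\<nu>0 \<in> psimplex B" using psimplex_ne[OF B(2,1)] by auto
  have bb: "bdd_below ((\<lambda>\<nu>. gf ti tj A B R \<mu> \<nu>) ` psimplex B)" if "\<mu> \<in> psimplex A" for \<mu>
    by (rule bdd_belowI2[where m="-M"]) (use bnd[OF that] in force)
  have ba: "bdd_above ((\<lambda>\<mu>. INF \<nu>\<in>psimplex B. gf ti tj A B R \<mu> \<nu>) ` psimplex A)"
  proof (rule bdd_aboveI2[where M=M])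
    fix \<mu> assume \<mu>: "\<mu> \<in> psimplex A"
    have "(INF \<nu>\<in>psimplex B. gf ti tj A B R \<mu> \<nu>) \<le> gf ti tj A B R \<mu> \<nu>0"
      by (rule cINF_lower[OF bb[OF \<mu>] \<nu>0])
    also have "\<dots> \<le> M" using bnd[OF \<mu> \<nu>0] by auto
    finally show "(INF \<nu>\<in>psimplex B. gf ti tj A B R \<mu> \<nu>) \<le> M" .
  qed
  have "rval ti tj A B R + \<epsilon> \<le> (INF \<nu>\<in>psimplex B. gf ti tj A B R \<mu>0 \<nu>)"
    using \<mu>0(2) by (intro cINF_greatest[OF psimplex_ne[OF B(2,1)]]) (auto intro: less_imp_le)
  also have "\<dots> \<le> (SUP \<mu>\<in>psimplex A. INF \<nu>\<in>psimplex B. gf ti tj A B R \<mu> \<nu>)"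
    by (rule cSUP_upper[OF \<mu>0(1) ba])
  also have "\<dots> = rval ti tj A B R" by (simp add: rval_gf)
  finally show False using e by linarith
qed

lemma weighted_bounds:
  assumes A: "finite A" and B: "finite B" and \<mu>: "\<mu> \<in> psimplex A" and \<nu>: "\<nu> \<in> psimplex B"
  shows "bilin A B R1 \<mu> \<nu> + bilin B A R2 \<nu> \<mu> = (\<Sum>a\<in>A. \<Sum>b\<in>B. \<mu> a * \<nu> b * (R1 a b + R2 b a))"
    and "(\<forall>a\<in>A. \<forall>b\<in>B. c \<le> R1 a b + R2 b a) \<Longrightarrow> c \<le> (\<Sum>a\<in>A. \<Sum>b\<in>B. \<mu> a * \<nu> b * (R1 a b + R2 b a))"
    and "(\<forall>a\<in>A. \<forall>b\<in>B. R1 a b + R2 b a \<le> c) \<Longrightarrow> (\<Sum>a\<in>A. \<Sum>b\<in>B. \<mu> a * \<nu> b * (R1 a b + R2 b a)) \<le> c"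
proof -
  have "bilin B A R2 \<nu> \<mu> = (\<Sum>a\<in>A. \<Sum>b\<in>B. \<nu> b * R2 b a * \<mu> a)"
    unfolding bilin_def by (rule sum.swap)
  then show "bilin A B R1 \<mu> \<nu> + bilin B A R2 \<nu> \<mu> = (\<Sum>a\<in>A. \<Sum>b\<in>B. \<mu> a * \<nu> b * (R1 a b + R2 b a))"
    unfolding bilin_def by (simp add: sum.distrib[symmetric] algebra_simps)
  have one: "(\<Sum>a\<in>A. \<Sum>b\<in>B. \<mu> a * \<nu> b * c) = c"
  proof -
    have s: "(\<Sum>b\<in>B. \<mu> a * \<nu> b * c) = \<mu> a * c" for a
    proof -
      have "(\<Sum>b\<in>B. \<mu> a * \<nu> b * c) = \<mu> a * c * (\<Sum>b\<in>B. \<nu> b)"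
        by (simp add: sum_distrib_left mult_ac)
      then show ?thesis using \<nu> by (simp add: psimplex_def)
    qed
    have "(\<Sum>a\<in>A. \<mu> a * c) = (\<Sum>a\<in>A. \<mu> a) * c" by (simp add: sum_distrib_right)
    then show ?thesis using \<mu> s by (simp add: psimplex_def)
  qed
  have w: "0 \<le> \<mu> a * \<nu> b" for a b using psimplex_le1[OF A \<mu>] psimplex_le1[OF B \<nu>] by simp
  show "(\<forall>a\<in>A. \<forall>b\<in>B. c \<le> R1 a b + R2 b a) \<Longrightarrow> c \<le> (\<Sum>a\<in>A. \<Sum>b\<in>B. \<mu> a * \<nu> b * (R1 a b + R2 b a))"
  proof -
    assume h: "\<forall>a\<in>A. \<forall>b\<in>B. c \<le> R1 a b + R2 b a"
    have "(\<Sum>a\<in>A. \<Sum>b\<in>B. \<mu> a * \<nu> b * c) \<le> (\<Sum>a\<in>A. \<Sum>b\<in>B. \<mu> a * \<nu> b * (R1 a b + R2 b a))"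
      using h w by (intro sum_mono mult_left_mono) auto
    then show ?thesis using one by simp
  qed
  show "(\<forall>a\<in>A. \<forall>b\<in>B. R1 a b + R2 b a \<le> c) \<Longrightarrow> (\<Sum>a\<in>A. \<Sum>b\<in>B. \<mu> a * \<nu> b * (R1 a b + R2 b a)) \<le> c"
  proof -
    assume h: "\<forall>a\<in>A. \<forall>b\<in>B. R1 a b + R2 b a \<le> c"
    have "(\<Sum>a\<in>A. \<Sum>b\<in>B. \<mu> a * \<nu> b * (R1 a b + R2 b a)) \<le> (\<Sum>a\<in>A. \<Sum>b\<in>B. \<mu> a * \<nu> b * c)"
      using h w by (intro sum_mono mult_left_mono) auto
    then show ?thesis using one by simp
  qed
qed

lemma sum_lower:
  assumes A1: "finite A1" "A1 \<noteq> {}" and A2: "finite A2" "A2 \<noteq> {}" and t1: "0 \<le> t1" and t2: "0 \<le> t2"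
    and hc: "\<forall>a\<in>A1. \<forall>b\<in>A2. c \<le> R1 a b + R2 b a"
  shows "c \<le> rval t1 t2 A1 A2 R1 + rval t2 t1 A2 A1 R2"
proof (rule field_le_epsilon)
  fix e :: real assume e: "0 < e"
  obtain \<nu> where \<nu>: "\<nu> \<in> psimplex A2" "\<forall>\<mu>\<in>psimplex A1. gf t1 t2 A1 A2 R1 \<mu> \<nu> \<le> rval t1 t2 A1 A2 R1 + e/2"
    using G1[OF A1 A2 t1 t2, of "e/2" R1] e by auto
  obtain \<mu> where \<mu>: "\<mu> \<in> psimplex A1" "\<forall>\<nu>\<in>psimplex A2. gf t2 t1 A2 A1 R2 \<nu> \<mu> \<le> rval t2 t1 A2 A1 R2 + e/2"
    using G1[OF A2 A1 t2 t1, of "e/2" R2] e by auto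
  have "gf t1 t2 A1 A2 R1 \<mu> \<nu> + gf t2 t1 A2 A1 R2 \<nu> \<mu> = bilin A1 A2 R1 \<mu> \<nu> + bilin A2 A1 R2 \<nu> \<mu>"
    by (simp add: gf_def)
  moreover have "c \<le> bilin A1 A2 R1 \<mu> \<nu> + bilin A2 A1 R2 \<nu> \<mu>"
    using weighted_bounds(1)[OF A1(1) A2(1) \<mu>(1) \<nu>(1), where ?R1.0=R1 and ?R2.0=R2]
      weighted_bounds(2)[OF A1(1) A2(1) \<mu>(1) \<nu>(1), where ?R1.0=R1 and ?R2.0=R2 and c=c] hc by simp
  ultimately show "c \<le> rval t1 t2 A1 A2 R1 + rval t2 t1 A2 A1 R2 + e"
    using \<nu>(2)[rule_format, OF \<mu>(1)] \<mu>(2)[rule_format, OF \<nu>(1)] by linarith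
qed

lemma sum_upper:
  assumes A1: "finite A1" "A1 \<noteq> {}" and A2: "finite A2" "A2 \<noteq> {}" and t1: "0 \<le> t1" and t2: "0 \<le> t2"
    and hc: "\<forall>a\<in>A1. \<forall>b\<in>A2. R1 a b + R2 b a \<le> c"
  shows "rval t1 t2 A1 A2 R1 + rval t2 t1 A2 A1 R2 \<le> c"
proof (rule field_le_epsilon)
  fix e :: real assume e: "0 < e"
  obtain \<mu> where \<mu>: "\<mu> \<in> psimplex A1" "\<forall>\<nu>\<in>psimplex A2. rval t1 t2 A1 A2 R1 - e/2 \<le> gf t1 t2 A1 A2 R1 \<mu> \<nu>"
    using G2[OF A1 A2 t1 t2, of "e/2" R1] e by auto
  obtain \<nu> where \<nu>: "\<nu> \<in> psimplex A2" "\<forall>\<mu>\<in>psimplex A1. rval t2 t1 A2 A1 R2 - e/2 \<le> gf t2 t1 A2 A1 R2 \<nu> \<mu>"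
    using G2[OF A2 A1 t2 t1, of "e/2" R2] e by auto
  have "gf t1 t2 A1 A2 R1 \<mu> \<nu> + gf t2 t1 A2 A1 R2 \<nu> \<mu> = bilin A1 A2 R1 \<mu> \<nu> + bilin A2 A1 R2 \<nu> \<mu>"
    by (simp add: gf_def)
  moreover have "bilin A1 A2 R1 \<mu> \<nu> + bilin A2 A1 R2 \<nu> \<mu> \<le> c"
    using weighted_bounds(1)[OF A1(1) A2(1) \<mu>(1) \<nu>(1), where ?R1.0=R1 and ?R2.0=R2]
      weighted_bounds(3)[OF A1(1) A2(1) \<mu>(1) \<nu>(1), where ?R1.0=R1 and ?R2.0=R2 and c=c] hc by simp
  ultimately show "rval t1 t2 A1 A2 R1 + rval t2 t1 A2 A1 R2 \<le> c + e"
    using \<nu>(2)[rule_format, OF \<mu>(1)] \<mu>(2)[rule_format, OF \<nu>(1)] by linarith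
qed

lemma reg_upper:
  assumes A: "finite A" "A \<noteq> {}" and B: "finite B" "B \<noteq> {}" and ti: "0 \<le> ti" and tj: "0 \<le> tj"
  shows "rval ti tj A B R - val A B R \<le> ti * ln (card A)"
proof (rule field_le_epsilon)
  fix e :: real assume e: "0 < e"
  obtain \<mu> where \<mu>: "\<mu> \<in> psimplex A" "\<forall>\<nu>\<in>psimplex B. rval ti tj A B R - e/2 \<le> gf ti tj A B R \<mu> \<nu>"
    using G2[OF A B ti tj, of "e/2" R] e by auto
  obtain \<nu> where \<nu>: "\<nu> \<in> psimplex B" "\<forall>\<mu>\<in>psimplex A. gf 0 0 A B R \<mu> \<nu> \<le> rval 0 0 A B R + e/2"
    using G1[OF A B order_refl order_refl, of "e/2" R] e by auto
  have "ti * entropy A \<mu> \<le> ti * ln (card A)"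
    using entropy_le[OF A \<mu>(1)] ti by (simp add: mult_left_mono)
  moreover have "0 \<le> tj * entropy B \<nu>" using entropy_nonneg[OF B(1) \<nu>(1)] tj by simp
  moreover have "gf ti tj A B R \<mu> \<nu> = gf 0 0 A B R \<mu> \<nu> + ti * entropy A \<mu> - tj * entropy B \<nu>"
    by (simp add: gf_def)
  ultimately show "rval ti tj A B R - val A B R \<le> ti * ln (card A) + e"
    using \<nu>(2)[rule_format, OF \<mu>(1)] \<mu>(2)[rule_format, OF \<nu>(1)] val_rval[of A B R] by linarith
qed

lemma reg_lower:
  assumes A: "finite A" "A \<noteq> {}" and B: "finite B" "B \<noteq> {}" and ti: "0 \<le> ti" and tj: "0 \<le> tj"
  shows "- tj * ln (card B) \<le> rval ti tj A B R - val A B R"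
proof (rule field_le_epsilon)
  fix e :: real assume e: "0 < e"
  obtain \<mu> where \<mu>: "\<mu> \<in> psimplex A" "\<forall>\<nu>\<in>psimplex B. rval 0 0 A B R - e/2 \<le> gf 0 0 A B R \<mu> \<nu>"
    using G2[OF A B order_refl order_refl, of "e/2" R] e by auto
  obtain \<nu> where \<nu>: "\<nu> \<in> psimplex B" "\<forall>\<mu>\<in>psimplex A. gf ti tj A B R \<mu> \<nu> \<le> rval ti tj A B R + e/2"
    using G1[OF A B ti tj, of "e/2" R] e by auto
  have "tj * entropy B \<nu> \<le> tj * ln (card B)"
    using entropy_le[OF B \<nu>(1)] tj by (simp add: mult_left_mono)
  moreover have "0 \<le> ti * entropy A \<mu>" using entropy_nonneg[OF A(1) \<mu>(1)] ti by simp
  moreover have "gf ti tj A B R \<mu> \<nu> = gf 0 0 A B R \<mu> \<nu> + ti * entropy A \<mu> - tj * entropy B \<nu>"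
    by (simp add: gf_def)
  ultimately show "- tj * ln (card B) \<le> rval ti tj A B R - val A B R + e"
    using \<nu>(2)[rule_format, OF \<mu>(1)] \<mu>(2)[rule_format, OF \<nu>(1)] val_rval[of A B R] by linarith
qed

theorem lemma1:
  fixes A1 :: "'a set" and A2 :: "'b set"
    and R1 :: "'a \<Rightarrow> 'b \<Rightarrow> real" and R2 :: "'b \<Rightarrow> 'a \<Rightarrow> real"
    and tau1 tau2 :: real
  assumes "finite A1" "A1 \<noteq> {}" "finite A2" "A2 \<noteq> {}"
    and "tau1 \<ge> 0" "tau2 \<ge> 0"
  defines "rmin \<equiv> Min ((\<lambda>(a, b). R1 a b + R2 b a) ` (A1 \<times> A2))"
    and "rmax \<equiv> Max ((\<lambda>(a, b). R1 a b + R2 b a) ` (A1 \<times> A2))"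
  shows "(rmin \<le> val A1 A2 R1 + val A2 A1 R2 \<and> val A1 A2 R1 + val A2 A1 R2 \<le> rmax)
    \<and> (rmin \<le> rval tau1 tau2 A1 A2 R1 + rval tau2 tau1 A2 A1 R2
         \<and> rval tau1 tau2 A1 A2 R1 + rval tau2 tau1 A2 A1 R2 \<le> rmax)
    \<and> (- tau2 * ln (card A2) \<le> rval tau1 tau2 A1 A2 R1 - val A1 A2 R1
         \<and> rval tau1 tau2 A1 A2 R1 - val A1 A2 R1 \<le> tau1 * ln (card A1))
    \<and> (- tau1 * ln (card A1) \<le> rval tau2 tau1 A2 A1 R2 - val A2 A1 R2
         \<and> rval tau2 tau1 A2 A1 R2 - val A2 A1 R2 \<le> tau2 * ln (card A2))"
proof -
  have fin: "finite ((\<lambda>(a, b). R1 a b + R2 b a) ` (A1 \<times> A2))" using assms(1,3) by simp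
  have mem: "R1 a b + R2 b a \<in> (\<lambda>(a, b). R1 a b + R2 b a) ` (A1 \<times> A2)" if "a \<in> A1" "b \<in> A2" for a b
    using that by force
  have lo: "\<forall>a\<in>A1. \<forall>b\<in>A2. rmin \<le> R1 a b + R2 b a"
    unfolding rmin_def using Min_le[OF fin mem] by blast
  have hi: "\<forall>a\<in>A1. \<forall>b\<in>A2. R1 a b + R2 b a \<le> rmax"
    unfolding rmax_def using Max_ge[OF fin mem] by blast
  note A1 = assms(1,2) and A2 = assms(3,4)
  show ?thesis
    using sum_lower[OF A1 A2 assms(5,6) lo] sum_upper[OF A1 A2 assms(5,6) hi]
      sum_lower[OF A1 A2 order_refl order_refl lo] sum_upper[OF A1 A2 order_refl order_refl hi]
      reg_lower[OF A1 A2 assms(5,6), of R1] reg_upper[OF A1 A2 assms(5,6), of R1]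
      reg_lower[OF A2 A1 assms(6,5), of R2] reg_upper[OF A2 A1 assms(6,5), of R2]
    by (simp add: val_rval)
qed

end
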